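(* Let $\ell$ be a positive even integer, let $n$ be a positive integer that is a multiple of $\ell/2$, and let $u:\{-n,\dots,n\}\to\mathbb{R}$ satisfy $u(j)=u(-j)$ for all $j$ and $\sum_{j=-n}^{n}u(j)=1$. Assume that there exists a polynomial $Q(z)=\sum_{k=0}^{m}b_kz^k$ (with complex coefficients) having no zeros in the open unit disk $\mathbb{D}=\{z\in\mathbb{C}:|z|<1\}$ such that $\widehat{u}(\xi)=|Q(e^{i\xi})|^{\ell}$ for all $\xi\in\mathbb{T}$. Then $$\sup_{0\neq f\in\ell^2(\mathbb{Z})}\frac{\|\nabla^{\ell}(u\ast f)\|_{\ell^2(\mathbb{Z})}}{\|f\|_{\ell^2(\mathbb{Z})}}\ \ge\ \left(\frac{2}{1+2n/\ell}\right)^{\ell}.$$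
   Context: Functions on $\{-n,\dots,n\}$ are regarded as functions on $\mathbb{Z}$ vanishing outside $\{-n,\dots,n\}$. The discrete derivative is $\nabla g(k)=g(k+1)-g(k)$ and $\nabla^{\ell}=\nabla(\nabla^{\ell-1})$. Convolution: $(u\ast f)(k)=\sum_{j\in\mathbb{Z}}u(j)f(k-j)$. $\mathbb{T}=\mathbb{R}/2\pi\mathbb{Z}$ and the Fourier transform is $\widehat{u}(\xi)=\sum_{k}u(k)e^{-ik\xi}$. The supremum is over nonzero (complex-valued) $f\in\ell^2(\mathbb{Z})$. *)

theory Defs
  imports "HOL-Analysis.Analysis" "HOL-Computational_Algebra.Polynomial"
begin

definition nabla :: "(int \<Rightarrow> complex) \<Rightarrow> (int \<Rightarrow> complex)" where
  "nabla g = (\<lambda>k. g (k + 1) - g k)"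

definition nabla_pow :: "nat \<Rightarrow> (int \<Rightarrow> complex) \<Rightarrow> (int \<Rightarrow> complex)" where
  "nabla_pow l = nabla ^^ l"

definition conv :: "(int \<Rightarrow> real) \<Rightarrow> (int \<Rightarrow> complex) \<Rightarrow> (int \<Rightarrow> complex)" where
  "conv u f = (\<lambda>k. \<Sum>\<^sub>\<infinity>j\<in>UNIV. complex_of_real (u j) * f (k - j))"

definition fourier :: "(int \<Rightarrow> real) \<Rightarrow> real \<Rightarrow> complex" where
  "fourier u \<xi> = (\<Sum>\<^sub>\<infinity>k\<in>UNIV. complex_of_real (u k) * exp (- \<i> * of_int k * of_real \<xi>))"

definition in_l2 :: "(int \<Rightarrow> complex) \<Rightarrow> bool" where
  "in_l2 f \<longleftrightarrow> (\<lambda>k. (cmod (f k))\<^sup>2) summable_on UNIV"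

definition l2norm :: "(int \<Rightarrow> complex) \<Rightarrow> real" where
  "l2norm f = sqrt (\<Sum>\<^sub>\<infinity>k\<in>UNIV. (cmod (f k))\<^sup>2)"

end

theory Submission
  imports Defs
begin




definition opK :: "nat \<Rightarrow> (int \<Rightarrow> complex) \<Rightarrow> (int \<Rightarrow> complex) \<Rightarrow> int \<Rightarrow> complex" where
  "opK K a f k = (\<Sum>d = - int K..int K. a d * f (k + d))"

lemma has_sum_finsum:
  fixes f :: "'i \<Rightarrow> 'a \<Rightarrow> real"
  assumes "finite D" "\<And>d. d \<in> D \<Longrightarrow> (f d has_sum s d) A"
  shows "((\<lambda>k. \<Sum>d\<in>D. f d k) has_sum (\<Sum>d\<in>D. s d)) A"
  using assms
proof (induction D rule: finite_induct)
  case empty then show ?case by simp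
next
  case (insert x F)
  then show ?case by (simp add: has_sum_add)
qed

lemma shift_has_sum:
  fixes g :: "int \<Rightarrow> real"
  assumes "g summable_on UNIV"
  shows "((\<lambda>k. g (k + d)) has_sum infsum g UNIV) UNIV"
proof -
  have b: "bij_betw (\<lambda>k. k + d) UNIV UNIV"
    by (rule bij_betwI[where g="\<lambda>k. k - d"]) auto
  show ?thesis
    using has_sum_reindex_bij_betw[OF b, of g] assms by simp
qed

lemma pointwise_cs:
  fixes D :: "int set"
  assumes "finite D"
  shows "(cmod (\<Sum>d\<in>D. a d * x d))\<^sup>2 \<le> (\<Sum>d\<in>D. cmod (a d)) * (\<Sum>d\<in>D. cmod (a d) * (cmod (x d))\<^sup>2)"
proof -
  have "cmod (\<Sum>d\<in>D. a d * x d) \<le> (\<Sum>d\<in>D. cmod (a d) * cmod (x d))"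
    by (metis (no_types, lifting) norm_mult norm_sum sum.cong)
  also have "\<dots> = (\<Sum>d\<in>D. sqrt (cmod (a d)) * (sqrt (cmod (a d)) * cmod (x d)))"
    by (intro sum.cong) (auto simp: mult.assoc[symmetric])
  finally have 1: "cmod (\<Sum>d\<in>D. a d * x d) \<le> \<dots>" .
  have "(cmod (\<Sum>d\<in>D. a d * x d))\<^sup>2 \<le> (\<Sum>d\<in>D. sqrt (cmod (a d)) * (sqrt (cmod (a d)) * cmod (x d)))\<^sup>2"
    by (rule power_mono[OF 1]) simp
  also have "\<dots> \<le> (\<Sum>d\<in>D. (sqrt (cmod (a d)))\<^sup>2) * (\<Sum>d\<in>D. (sqrt (cmod (a d)) * cmod (x d))\<^sup>2)"
    by (rule Cauchy_Schwarz_ineq_sum)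
  also have "\<dots> = (\<Sum>d\<in>D. cmod (a d)) * (\<Sum>d\<in>D. cmod (a d) * (cmod (x d))\<^sup>2)"
    by (simp add: power_mult_distrib)
  finally show ?thesis .
qed

lemma opK_bound:
  assumes "in_l2 f"
  shows "l2norm (opK K a f) \<le> (\<Sum>d = - int K..int K. cmod (a d)) * l2norm f"
proof -
  define D where "D = {- int K..int K}"
  define C where "C = (\<Sum>d\<in>D. cmod (a d))"
  define S where "S = (\<Sum>\<^sub>\<infinity>k\<in>UNIV. (cmod (f k))\<^sup>2)"
  have C0: "C \<ge> 0" unfolding C_def by (simp add: sum_nonneg)
  have S0: "S \<ge> 0" unfolding S_def by (simp add: infsum_nonneg)
  have fs: "(\<lambda>k. (cmod (f k))\<^sup>2) summable_on UNIV" using assms by (simp add: in_l2_def)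
  have h: "((\<lambda>k. C * (\<Sum>d\<in>D. cmod (a d) * (cmod (f (k + d)))\<^sup>2)) has_sum (C * (\<Sum>d\<in>D. cmod (a d) * S))) UNIV"
    apply (rule has_sum_cmult_right)
    apply (rule has_sum_finsum)
     apply (simp add: D_def)
    apply (rule has_sum_cmult_right)
    unfolding S_def by (rule shift_has_sum[OF fs])
  have pw: "(cmod (opK K a f k))\<^sup>2 \<le> C * (\<Sum>d\<in>D. cmod (a d) * (cmod (f (k + d)))\<^sup>2)" for k
    unfolding opK_def C_def D_def by (rule pointwise_cs) simp
  have gs: "(\<lambda>k. (cmod (opK K a f k))\<^sup>2) summable_on UNIV"
    by (rule summable_on_comparison_test[OF has_sum_imp_summable[OF h] pw]) simp
  have "(\<Sum>\<^sub>\<infinity>k\<in>UNIV. (cmod (opK K a f k))\<^sup>2) \<le> C * (\<Sum>d\<in>D. cmod (a d) * S)"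
    using has_sum_mono[OF has_sum_infsum[OF gs] h pw] .
  also have "\<dots> = (C * sqrt S)\<^sup>2"
    using S0 by (simp add: sum_distrib_right[symmetric] C_def power2_eq_square)
  finally have "l2norm (opK K a f) \<le> sqrt ((C * sqrt S)\<^sup>2)"
    unfolding l2norm_def by (rule real_sqrt_le_mono)
  also have "\<dots> = C * l2norm f" using C0 S0 by (simp add: l2norm_def S_def)
  finally show ?thesis by (simp add: C_def D_def)
qed



definition supp_in :: "nat \<Rightarrow> (int \<Rightarrow> complex) \<Rightarrow> bool" where
  "supp_in K a \<longleftrightarrow> (\<forall>d. (d < - int K \<or> d > int K) \<longrightarrow> a d = 0)"

definition dif :: "(int \<Rightarrow> complex) \<Rightarrow> (int \<Rightarrow> complex)" where
  "dif a = (\<lambda>d. a (d - 1) - a d)"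

lemma sum_extend:
  assumes "supp_in K a" "K \<le> K'"
  shows "(\<Sum>d = - int K'..int K'. a d * g d) = (\<Sum>d = - int K..int K. a d * g d)"
  by (rule sum.mono_neutral_right) (use assms in \<open>auto simp: supp_in_def\<close>)

lemma sum_shift_int:
  fixes g :: "int \<Rightarrow> 'b::comm_monoid_add"
  shows "(\<Sum>d = lo..hi. g d) = (\<Sum>e = lo - 1..hi - 1. g (e + 1))"
  by (rule sum.reindex_bij_witness[where i="\<lambda>d. d + 1" and j="\<lambda>e. e - 1"]) auto

lemma supp_dif: "supp_in K a \<Longrightarrow> supp_in (Suc K) (dif a)"
  by (auto simp: supp_in_def dif_def)

lemma nabla_opK:
  assumes "supp_in K a"
  shows "nabla (opK K a f) = opK (Suc K) (dif a) f"
proof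
  fix k
  have s0: "(\<Sum>d = - int (Suc K)..int (Suc K). a d * f (k + d)) = opK K a f k"
    unfolding opK_def by (rule sum_extend[OF assms]) simp
  have "(\<Sum>d = - int (Suc K)..int (Suc K). a (d - 1) * f (k + d))
      = (\<Sum>e = - int (Suc K) - 1..int (Suc K) - 1. a e * f (k + 1 + e))"
    by (subst sum_shift_int) (simp add: add_ac)
  also have "\<dots> = (\<Sum>e = - int (Suc (Suc K))..int K. a e * f (k + 1 + e))"
    by (simp add: algebra_simps)
  also have "\<dots> = opK K a f (k + 1)"
    unfolding opK_def
    by (rule sum.mono_neutral_right) (use assms in \<open>auto simp: supp_in_def\<close>)
  finally have s1: "(\<Sum>d = - int (Suc K)..int (Suc K). a (d - 1) * f (k + d)) = opK K a f (k + 1)" .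
  show "nabla (opK K a f) k = opK (Suc K) (dif a) f k"
    unfolding nabla_def opK_def[of "Suc K"] dif_def left_diff_distrib sum_subtractf s0 s1 ..
qed

lemma nabla_pow_opK:
  assumes "supp_in K a"
  shows "nabla_pow i (opK K a f) = opK (K + i) ((dif ^^ i) a) f \<and> supp_in (K + i) ((dif ^^ i) a)"
proof (induction i)
  case 0 then show ?case using assms by (simp add: nabla_pow_def)
next
  case (Suc i)
  then show ?case
    by (simp add: nabla_pow_def nabla_opK supp_dif)
qed

lemma nabla_pow_exp:
  "nabla_pow i (\<lambda>k. c * cis (of_int k * \<xi>)) = (\<lambda>k. (cis \<xi> - 1) ^ i * c * cis (of_int k * \<xi>))"
proof (induction i)
  case 0 then show ?case by (simp add: nabla_pow_def)
next
  case (Suc i)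
  have "nabla_pow (Suc i) (\<lambda>k. c * cis (of_int k * \<xi>)) = nabla (nabla_pow i (\<lambda>k. c * cis (of_int k * \<xi>)))"
    by (simp add: nabla_pow_def)
  also have "\<dots> = (\<lambda>k. (cis \<xi> - 1) ^ Suc i * c * cis (of_int k * \<xi>))"
    unfolding Suc nabla_def
    by (rule ext) (simp add: distrib_right cis_mult[symmetric] algebra_simps)
  finally show ?case .
qed

lemma opK_exp: "opK K a (\<lambda>k. cis (of_int k * \<xi>)) k = cis (of_int k * \<xi>) * opK K a (\<lambda>k. cis (of_int k * \<xi>)) 0"
  unfolding opK_def sum_distrib_left
  by (rule sum.cong) (simp_all add: distrib_right cis_mult[symmetric] algebra_simps)

lemma opK_l2:
  assumes "in_l2 f"
  shows "in_l2 (opK K a f)"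
proof -
  define D where "D = {- int K..int K}"
  define C where "C = (\<Sum>d\<in>D. cmod (a d))"
  define S where "S = (\<Sum>\<^sub>\<infinity>k\<in>UNIV. (cmod (f k))\<^sup>2)"
  have fs: "(\<lambda>k. (cmod (f k))\<^sup>2) summable_on UNIV" using assms by (simp add: in_l2_def)
  have h: "((\<lambda>k. C * (\<Sum>d\<in>D. cmod (a d) * (cmod (f (k + d)))\<^sup>2)) has_sum (C * (\<Sum>d\<in>D. cmod (a d) * S))) UNIV"
    apply (rule has_sum_cmult_right)
    apply (rule has_sum_finsum)
     apply (simp add: D_def)
    apply (rule has_sum_cmult_right)
    unfolding S_def by (rule shift_has_sum[OF fs])
  have pw: "(cmod (opK K a f k))\<^sup>2 \<le> C * (\<Sum>d\<in>D. cmod (a d) * (cmod (f (k + d)))\<^sup>2)" for k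
    unfolding opK_def C_def D_def by (rule pointwise_cs) simp
  show ?thesis unfolding in_l2_def
    by (rule summable_on_comparison_test[OF has_sum_imp_summable[OF h] pw]) simp
qed

definition testf :: "real \<Rightarrow> nat \<Rightarrow> int \<Rightarrow> complex" where
  "testf \<xi> N k = (if - int N \<le> k \<and> k \<le> int N then cis (of_int k * \<xi>) else 0)"

lemma testf_sq_has_sum: "((\<lambda>k. (cmod (testf \<xi> N k))\<^sup>2) has_sum (2 * real N + 1)) UNIV"
proof -
  have e: "(\<Sum>k\<in>{- int N..int N}. (cmod (testf \<xi> N k))\<^sup>2) = 2 * real N + 1"
    by (simp add: testf_def)
  have fin: "((\<lambda>k. (cmod (testf \<xi> N k))\<^sup>2) has_sum (2 * real N + 1)) {- int N..int N}"
    unfolding e[symmetric] by (rule has_sum_finite) simp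
  show ?thesis
    using fin by (subst has_sum_cong_neutral[where T="{- int N..int N}" and g="\<lambda>k. (cmod (testf \<xi> N k))\<^sup>2"])
       (auto simp: testf_def)
qed

lemma testf_l2: "in_l2 (testf \<xi> N)"
  unfolding in_l2_def using testf_sq_has_sum[of \<xi> N] by (rule has_sum_imp_summable)

lemma testf_norm: "l2norm (testf \<xi> N) = sqrt (2 * real N + 1)"
  unfolding l2norm_def using testf_sq_has_sum[of \<xi> N] by (simp add: has_sum_iff)

lemma testf_nz: "testf \<xi> N \<noteq> (\<lambda>_. 0)"
proof
  assume "testf \<xi> N = (\<lambda>_. 0)"
  then have "testf \<xi> N 0 = 0" by simp
  then show False by (simp add: testf_def)
qed

lemma testf_lower:
  assumes "K \<le> N"
  shows "sqrt (2 * real (N - K) + 1) * cmod (opK K a (\<lambda>k. cis (of_int k * \<xi>)) 0) \<le> l2norm (opK K a (testf \<xi> N))"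
proof -
  define s where "s = opK K a (\<lambda>k. cis (of_int k * \<xi>)) 0"
  have eq: "opK K a (testf \<xi> N) k = cis (of_int k * \<xi>) * s" if "- int (N - K) \<le> k" "k \<le> int (N - K)" for k
  proof -
    have "opK K a (testf \<xi> N) k = opK K a (\<lambda>k. cis (of_int k * \<xi>)) k"
      unfolding opK_def
    proof (rule sum.cong[OF refl])
      fix d assume d: "d \<in> {- int K..int K}"
      have "int (N - K) = int N - int K" using assms by simp
      then have "- int N \<le> k + d \<and> k + d \<le> int N" using that d by auto
      then show "a d * testf \<xi> N (k + d) = a d * cis (of_int (k + d) * \<xi>)"
        by (simp add: testf_def)
    qed
    then show ?thesis unfolding s_def by (metis opK_exp)
  qed
  have "(\<Sum>k\<in>{- int (N - K)..int (N - K)}. (cmod (opK K a (testf \<xi> N) k))\<^sup>2) = (2 * real (N - K) + 1) * (cmod s)\<^sup>2"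
  proof -
    have "(\<Sum>k\<in>{- int (N - K)..int (N - K)}. (cmod (opK K a (testf \<xi> N) k))\<^sup>2) = (\<Sum>k\<in>{- int (N - K)..int (N - K)}. (cmod s)\<^sup>2)"
      by (rule sum.cong) (auto simp: eq norm_mult)
    also have "\<dots> = (2 * real (N - K) + 1) * (cmod s)\<^sup>2" by simp
    finally show ?thesis .
  qed
  moreover have "(\<Sum>k\<in>{- int (N - K)..int (N - K)}. (cmod (opK K a (testf \<xi> N) k))\<^sup>2) \<le> (\<Sum>\<^sub>\<infinity>k\<in>UNIV. (cmod (opK K a (testf \<xi> N) k))\<^sup>2)"
    by (rule finite_sum_le_infsum) (use opK_l2[OF testf_l2] in \<open>auto simp: in_l2_def\<close>)
  ultimately have "(2 * real (N - K) + 1) * (cmod s)\<^sup>2 \<le> (\<Sum>\<^sub>\<infinity>k\<in>UNIV. (cmod (opK K a (testf \<xi> N) k))\<^sup>2)" by simp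
  then have "sqrt ((2 * real (N - K) + 1) * (cmod s)\<^sup>2) \<le> l2norm (opK K a (testf \<xi> N))"
    unfolding l2norm_def by (rule real_sqrt_le_mono)
  then show ?thesis by (simp add: real_sqrt_mult s_def)
qed



lemma conv_opK:
  assumes supp: "\<forall>j. (j < - int n \<or> j > int n) \<longrightarrow> u j = 0"
  shows "conv u f = opK n (\<lambda>d. complex_of_real (u (- d))) f"
proof
  fix k
  have "conv u f k = (\<Sum>\<^sub>\<infinity>j\<in>{- int n..int n}. complex_of_real (u j) * f (k - j))"
    unfolding conv_def by (rule infsum_cong_neutral) (use supp in auto)
  also have "\<dots> = (\<Sum>j\<in>{- int n..int n}. complex_of_real (u j) * f (k - j))"
    by simp
  also have "\<dots> = (\<Sum>d\<in>{- int n..int n}. complex_of_real (u (- d)) * f (k + d))"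
    by (rule sum.reindex_bij_witness[where i="\<lambda>d. - d" and j="\<lambda>d. - d"]) auto
  finally show "conv u f k = opK n (\<lambda>d. complex_of_real (u (- d))) f k"
    by (simp add: opK_def)
qed

lemma fourier_opK:
  assumes supp: "\<forall>j. (j < - int n \<or> j > int n) \<longrightarrow> u j = 0"
  shows "fourier u \<xi> = opK n (\<lambda>d. complex_of_real (u (- d))) (\<lambda>k. cis (of_int k * \<xi>)) 0"
proof -
  have "fourier u \<xi> = (\<Sum>\<^sub>\<infinity>j\<in>{- int n..int n}. complex_of_real (u j) * exp (- \<i> * of_int j * of_real \<xi>))"
    unfolding fourier_def by (rule infsum_cong_neutral) (use supp in auto)
  also have "\<dots> = (\<Sum>j\<in>{- int n..int n}. complex_of_real (u j) * exp (- \<i> * of_int j * of_real \<xi>))"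
    by simp
  also have "\<dots> = (\<Sum>d\<in>{- int n..int n}. complex_of_real (u (- d)) * cis (of_int d * \<xi>))"
    by (rule sum.reindex_bij_witness[where i="\<lambda>d. - d" and j="\<lambda>d. - d"]) (auto simp: cis_conv_exp mult.assoc)
  finally show ?thesis
    by (simp add: opK_def)
qed

lemma supp_a0:
  assumes supp: "\<forall>j. (j < - int n \<or> j > int n) \<longrightarrow> u j = 0"
  shows "supp_in n (\<lambda>d. complex_of_real (u (- d)))"
  using supp by (auto simp: supp_in_def)

lemma symbol_formula:
  assumes supp: "\<forall>j. (j < - int n \<or> j > int n) \<longrightarrow> u j = 0"
  defines "a0 \<equiv> (\<lambda>d. complex_of_real (u (- d)))"
  shows "opK (n + l) ((dif ^^ l) a0) (\<lambda>k. cis (of_int k * \<xi>)) 0 = (cis \<xi> - 1) ^ l * fourier u \<xi>"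
proof -
  have s: "supp_in n a0" using supp_a0[OF supp] by (simp add: a0_def)
  have "opK (n + l) ((dif ^^ l) a0) (\<lambda>k. cis (of_int k * \<xi>)) = nabla_pow l (opK n a0 (\<lambda>k. cis (of_int k * \<xi>)))"
    using nabla_pow_opK[OF s] by simp
  also have "opK n a0 (\<lambda>k. cis (of_int k * \<xi>)) = (\<lambda>k. fourier u \<xi> * cis (of_int k * \<xi>))"
  proof
    fix k
    have "opK n a0 (\<lambda>k. cis (of_int k * \<xi>)) k = cis (of_int k * \<xi>) * opK n a0 (\<lambda>k. cis (of_int k * \<xi>)) 0"
      by (rule opK_exp)
    also have "opK n a0 (\<lambda>k. cis (of_int k * \<xi>)) 0 = fourier u \<xi>"
      using fourier_opK[OF supp, of \<xi>] by (simp add: a0_def)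
    finally show "opK n a0 (\<lambda>k. cis (of_int k * \<xi>)) k = fourier u \<xi> * cis (of_int k * \<xi>)"
      by (simp add: mult.commute)
  qed
  finally show ?thesis by (simp add: nabla_pow_exp)
qed



locale rootsN =
  fixes N :: nat
  assumes Npos: "N > 0"
begin

definition w :: complex where "w = cis (pi / real N)"
definition z :: "nat \<Rightarrow> complex" where "z k = w ^ (2 * k + 1)"
definition c :: "nat \<Rightarrow> complex" where "c k = - (1 / of_nat N) * (\<Sum>i\<in>{1..N}. z k ^ i)"

lemma wN: "w ^ N = -1"
  using Npos by (simp add: w_def Complex.DeMoivre)

lemma zN: "z k ^ N = -1"
proof -
  have "z k ^ N = (w ^ N) ^ (2 * k + 1)"
    unfolding z_def power_mult[symmetric] by (simp only: mult.commute)
  also have "\<dots> = -1" by (simp add: wN)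
  finally show ?thesis .
qed

lemma norm_z: "cmod (z k) = 1"
  unfolding z_def w_def norm_power by simp

lemma z_ne1: "z k \<noteq> 1"
  using zN[of k] by auto

lemma w2q: "w ^ (2 * q) = exp (2 * of_real pi * \<i> * of_nat q / of_nat N)"
proof -
  have "w ^ (2 * q) = cis (real (2 * q) * (pi / real N))" by (simp add: w_def Complex.DeMoivre)
  also have "\<dots> = exp (2 * of_real pi * \<i> * of_nat q / of_nat N)"
    by (simp add: cis_conv_exp field_simps)
  finally show ?thesis .
qed

lemma powsum:
  assumes "1 \<le> q" "q < 2 * N"
  shows "(\<Sum>k<N. z k ^ q) = (if q = N then - of_nat N else 0)"
proof (cases "q = N")
  case True
  then show ?thesis by (simp add: zN)
next
  case False
  have ndvd: "\<not> N dvd q"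
  proof
    assume "N dvd q"
    then obtain t where "q = N * t" by auto
    have "t \<noteq> 0" using \<open>q = N * t\<close> assms by auto
    moreover have "t \<noteq> 1" using \<open>q = N * t\<close> False by auto
    ultimately have "t \<ge> 2" by linarith
    then have "N * 2 \<le> N * t" by (rule mult_le_mono2)
    with \<open>q = N * t\<close> assms show False by linarith
  qed
  define r where "r = w ^ (2 * q)"
  have r1: "r \<noteq> 1"
    using complex_root_unity_eq_1[of N q] Npos ndvd by (simp add: r_def w2q)
  have rN: "r ^ N = 1"
  proof -
    have "r ^ N = (w ^ N) ^ (2 * q)" by (simp add: r_def power_mult[symmetric] mult.commute)
    then show ?thesis by (simp add: wN)
  qed
  have "(\<Sum>k<N. z k ^ q) = (\<Sum>k<N. w ^ q * r ^ k)"
    by (rule sum.cong) (simp_all add: z_def r_def power_mult[symmetric] power_add[symmetric] algebra_simps)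
  also have "\<dots> = w ^ q * (\<Sum>k<N. r ^ k)" by (simp add: sum_distrib_left)
  also have "\<dots> = 0" using geometric_sum[OF r1, of N] rN by simp
  finally show ?thesis using False by simp
qed

lemma interp_id:
  fixes b :: "nat \<Rightarrow> complex"
  shows "(\<Sum>j<N. b j) = (\<Sum>k<N. c k * (\<Sum>j<N. b j * z k ^ j))"
proof -
  have inner: "(\<Sum>i\<in>{1..N}. \<Sum>k<N. z k ^ (i + j)) = - of_nat N" if j: "j < N" for j
  proof -
    have "(\<Sum>i\<in>{1..N}. \<Sum>k<N. z k ^ (i + j)) = (\<Sum>i\<in>{1..N}. if i = N - j then - of_nat N else 0)"
      by (rule sum.cong) (use j in \<open>auto simp: powsum\<close>)
    also have "\<dots> = - of_nat N" using j by (subst sum.delta) auto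
    finally show ?thesis .
  qed
  define F where "F k i j = - (1 / of_nat N) * b j * z k ^ (i + j)" for k i j
  have "(\<Sum>k<N. c k * (\<Sum>j<N. b j * z k ^ j)) = (\<Sum>k<N. \<Sum>i\<in>{1..N}. \<Sum>j<N. F k i j)"
  proof (rule sum.cong[OF refl])
    fix k
    have "c k * (\<Sum>j<N. b j * z k ^ j) = - (1 / of_nat N) * ((\<Sum>i\<in>{1..N}. z k ^ i) * (\<Sum>j<N. b j * z k ^ j))"
      by (simp add: c_def)
    also have "\<dots> = - (1 / of_nat N) * (\<Sum>i\<in>{1..N}. \<Sum>j<N. z k ^ i * (b j * z k ^ j))"
      by (simp only: sum_product)
    also have "\<dots> = (\<Sum>i\<in>{1..N}. \<Sum>j<N. F k i j)"
      by (simp add: sum_distrib_left F_def power_add mult_ac)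
    finally show "c k * (\<Sum>j<N. b j * z k ^ j) = (\<Sum>i\<in>{1..N}. \<Sum>j<N. F k i j)" .
  qed
  also have "\<dots> = (\<Sum>k<N. \<Sum>j<N. \<Sum>i\<in>{1..N}. F k i j)"
    by (rule sum.cong[OF refl]) (rule sum.swap)
  also have "\<dots> = (\<Sum>j<N. \<Sum>k<N. \<Sum>i\<in>{1..N}. F k i j)"
    by (rule sum.swap)
  also have "\<dots> = (\<Sum>j<N. \<Sum>i\<in>{1..N}. \<Sum>k<N. F k i j)"
    by (rule sum.cong[OF refl]) (rule sum.swap)
  also have "\<dots> = (\<Sum>j<N. - (1 / of_nat N) * b j * (\<Sum>i\<in>{1..N}. \<Sum>k<N. z k ^ (i + j)))"
    by (simp add: sum_distrib_left F_def)
  also have "\<dots> = (\<Sum>j<N. b j)"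
  proof (rule sum.cong[OF refl])
    fix j assume "j \<in> {..<N}"
    then have "(\<Sum>i\<in>{1..N}. \<Sum>k<N. z k ^ (i + j)) = - of_nat N" by (intro inner) simp
    then show "- (1 / of_nat N) * b j * (\<Sum>i\<in>{1..N}. \<Sum>k<N. z k ^ (i + j)) = b j"
      using Npos by simp
  qed
  finally show ?thesis by simp
qed


lemma geo_z: "(\<Sum>i<N. z k ^ i) = 2 / (1 - z k)"
proof -
  have "z k - 1 \<noteq> 0" "1 - z k \<noteq> 0" using z_ne1[of k] by auto
  then show ?thesis using geometric_sum[OF z_ne1[of k], of N] zN[of k]
    by (simp add: field_simps)
qed

lemma c_formula: "c k = - (2 / of_nat N) * (z k / (1 - z k))"
proof -
  have "(\<Sum>i\<in>{1..N}. z k ^ i) = (\<Sum>i<N. z k ^ Suc i)"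
    by (simp add: sum.atLeast1_atMost_eq)
  also have "\<dots> = z k * (\<Sum>i<N. z k ^ i)" by (simp add: sum_distrib_left)
  also have "\<dots> = 2 * (z k / (1 - z k))" by (simp add: geo_z)
  finally show ?thesis by (simp add: c_def)
qed

lemma one_minus_z_ne: "1 - z k \<noteq> 0" using z_ne1[of k] by auto

lemma F8: "- z k / (1 - z k) ^ 2 = complex_of_real (1 / (cmod (1 - z k))\<^sup>2)"
proof -
  have zz: "z k * cnj (z k) = 1"
    using complex_norm_square[of "z k"] norm_z[of k] by simp
  have z0: "z k \<noteq> 0" using norm_z[of k] by auto
  have c: "cnj (z k) = 1 / z k" using zz z0 by (simp add: field_simps)
  have "complex_of_real ((cmod (1 - z k))\<^sup>2) = (1 - z k) * (1 - cnj (z k))"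
    using complex_norm_square[of "1 - z k"] by simp
  also have "\<dots> = - ((1 - z k) ^ 2) / z k" using z0 by (simp add: c field_simps power2_eq_square)
  finally have e: "complex_of_real ((cmod (1 - z k))\<^sup>2) = - ((1 - z k) ^ 2) / z k" .
  have "complex_of_real (1 / (cmod (1 - z k))\<^sup>2) = 1 / complex_of_real ((cmod (1 - z k))\<^sup>2)"
    by simp
  also have "\<dots> = - z k / (1 - z k) ^ 2" unfolding e using z0 one_minus_z_ne[of k]
    by (simp add: field_simps)
  finally show ?thesis by simp
qed

lemma F9: "(\<Sum>k<N. 1 / (cmod (1 - z k))\<^sup>2) = (real N)\<^sup>2 / 4"
proof -
  have "of_nat N = (\<Sum>k<N. c k * (\<Sum>j<N. 1 * z k ^ j))"
    using interp_id[of "\<lambda>_. 1"] by simp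
  also have "\<dots> = (\<Sum>k<N. complex_of_real (4 / real N * (1 / (cmod (1 - z k))\<^sup>2)))"
  proof (rule sum.cong[OF refl])
    fix k
    have "c k * (\<Sum>j<N. 1 * z k ^ j) = (4 / of_nat N) * (- z k / (1 - z k) ^ 2)"
      using one_minus_z_ne[of k] by (simp add: geo_z c_formula field_simps power2_eq_square)
    also have "\<dots> = complex_of_real (4 / real N * (1 / (cmod (1 - z k))\<^sup>2))"
      by (subst F8) simp
    finally show "c k * (\<Sum>j<N. 1 * z k ^ j) = complex_of_real (4 / real N * (1 / (cmod (1 - z k))\<^sup>2))" .
  qed
  also have "\<dots> = complex_of_real (4 / real N * (\<Sum>k<N. 1 / (cmod (1 - z k))\<^sup>2))"
    by (simp add: sum_distrib_left)
  finally have "real N = 4 / real N * (\<Sum>k<N. 1 / (cmod (1 - z k))\<^sup>2)"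
    by (metis of_real_eq_iff of_real_of_nat_eq)
  then show ?thesis using Npos by (simp add: field_simps power2_eq_square)
qed

lemma interp_poly:
  fixes Q :: "complex poly"
  assumes "degree Q < N"
  shows "poly Q 1 = (\<Sum>k<N. c k * poly Q (z k))"
proof -
  have pe: "poly Q x = (\<Sum>j<N. coeff Q j * x ^ j)" for x
  proof -
    have "poly Q x = (\<Sum>j\<le>degree Q. coeff Q j * x ^ j)" by (simp add: poly_altdef)
    also have "\<dots> = (\<Sum>j<N. coeff Q j * x ^ j)"
      by (rule sum.mono_neutral_left) (use assms in \<open>auto simp: coeff_eq_0\<close>)
    finally show ?thesis .
  qed
  show ?thesis unfolding pe using interp_id[of "coeff Q"] by simp
qed

lemma interp_ineq:
  fixes Q :: "complex poly"
  assumes "degree Q < N"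
  shows "\<exists>k<N. 2 * cmod (poly Q 1) / real N \<le> cmod (z k - 1) * cmod (poly Q (z k))"
proof (rule ccontr)
  assume "\<not> ?thesis"
  then have lt: "cmod (z k - 1) * cmod (poly Q (z k)) < 2 * cmod (poly Q 1) / real N" if "k < N" for k
    using that by force
  define M where "M = 2 * cmod (poly Q 1) / real N"
  have cn: "cmod (c k) = 2 / real N / cmod (1 - z k)" for k
    using norm_z[of k] by (simp add: c_formula norm_mult norm_divide)
  have "cmod (poly Q 1) \<le> (\<Sum>k<N. cmod (c k * poly Q (z k)))"
    unfolding interp_poly[OF assms] by (rule norm_sum)
  also have "\<dots> < (\<Sum>k<N. 2 / real N * M * (1 / (cmod (1 - z k))\<^sup>2))"
  proof (rule sum_strict_mono)
    show "{..<N} \<noteq> {}" using Npos by auto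
    fix k assume "k \<in> {..<N}"
    then have l: "cmod (1 - z k) * cmod (poly Q (z k)) < M"
      using lt[of k] by (simp add: M_def norm_minus_commute)
    have p: "cmod (1 - z k) > 0" using one_minus_z_ne[of k] by simp
    have "cmod (c k * poly Q (z k)) = 2 / real N * (cmod (1 - z k) * cmod (poly Q (z k))) / (cmod (1 - z k))\<^sup>2"
      using p by (simp add: norm_mult cn field_simps power2_eq_square)
    also have "\<dots> < 2 / real N * M / (cmod (1 - z k))\<^sup>2"
      using l p Npos by (intro divide_strict_right_mono mult_strict_left_mono) auto
    finally show "cmod (c k * poly Q (z k)) < 2 / real N * M * (1 / (cmod (1 - z k))\<^sup>2)" by simp
  qed (simp)
  also have "\<dots> = 2 / real N * M * ((real N)\<^sup>2 / 4)"
    by (simp only: sum_distrib_left[symmetric] F9)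
  also have "\<dots> = cmod (poly Q 1)" using Npos by (simp add: M_def field_simps power2_eq_square)
  finally show False by simp
qed

end



lemma fourier_shift:
  assumes supp: "\<forall>j. (j < - int n \<or> j > int n) \<longrightarrow> u j = 0"
  shows "cis \<xi> ^ n * fourier u \<xi> = (\<Sum>i\<le>2 * n. complex_of_real (u (int n - int i)) * cis \<xi> ^ i)"
proof -
  have "cis \<xi> ^ n * fourier u \<xi> = (\<Sum>d\<in>{- int n..int n}. complex_of_real (u (- d)) * (cis \<xi> ^ n * cis (of_int d * \<xi>)))"
    unfolding fourier_opK[OF supp] opK_def by (simp add: sum_distrib_left mult_ac)
  also have "\<dots> = (\<Sum>i\<le>2 * n. complex_of_real (u (int n - int i)) * cis \<xi> ^ i)"
  proof (rule sum.reindex_bij_witness[where i="\<lambda>i. int i - int n" and j="\<lambda>d. nat (d + int n)"])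
    fix d assume d: "d \<in> {- int n..int n}"
    then show "int (nat (d + int n)) - int n = d" by auto
    show "nat (d + int n) \<in> {..2 * n}" using d by auto
    have "cis \<xi> ^ n * cis (of_int d * \<xi>) = cis \<xi> ^ nat (d + int n)"
    proof -
      have "cis \<xi> ^ nat (d + int n) = cis (real (nat (d + int n)) * \<xi>)" by (simp add: Complex.DeMoivre)
      also have "real (nat (d + int n)) = of_int d + real n" using d by auto
      finally show ?thesis by (simp add: Complex.DeMoivre cis_mult distrib_right add.commute)
    qed
    moreover have "int n - int (nat (d + int n)) = - d" using d by auto
    ultimately show "complex_of_real (u (int n - int (nat (d + int n)))) * cis \<xi> ^ nat (d + int n)
        = complex_of_real (u (- d)) * (cis \<xi> ^ n * cis (of_int d * \<xi>))" by simp
  qed auto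
  finally show ?thesis .
qed

lemma deg_bound:
  fixes Q :: "complex poly" and u :: "int \<Rightarrow> real" and n p :: nat
  assumes ppos: "p > 0" and Q0: "coeff Q 0 \<noteq> 0"
    and supp: "\<forall>j. (j < - int n \<or> j > int n) \<longrightarrow> u j = 0"
    and F: "\<forall>\<xi>::real. fourier u \<xi> = complex_of_real ((cmod (poly Q (cis \<xi>))) ^ (2 * p))"
  shows "degree Q * p \<le> n"
proof -
  define m where "m = degree Q"
  define Qc where "Qc = map_poly cnj Q"
  define R where "R = reflect_poly Qc"
  have cQc: "coeff Qc 0 \<noteq> 0" using Q0 by (simp add: Qc_def coeff_map_poly)
  have dQc: "degree Qc = m" unfolding Qc_def m_def by (rule degree_map_poly) simp
  have dR: "degree R = m" using cQc dQc by (simp add: R_def)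
  have Qnz: "Q \<noteq> 0" using Q0 by auto
  have Rnz: "R \<noteq> 0" using cQc by (auto simp: R_def)
  have QR: "poly Q z * poly R z = z ^ m * complex_of_real ((cmod (poly Q z))\<^sup>2)" if z1: "cmod z = 1" for z
  proof -
    have z0: "z \<noteq> 0" using z1 by auto
    have zz: "z * cnj z = 1" using complex_norm_square[of z] z1 by simp
    have ci: "inverse (cnj z) = z" using zz z0 by (simp add: field_simps)
    have "poly R z = z ^ m * cnj (poly Q z)"
      unfolding R_def using z0 by (simp add: poly_reflect_poly_nz dQc[unfolded Qc_def] Qc_def ci)
    then show ?thesis using complex_norm_square[of "poly Q z"] by (simp add: mult_ac)
  qed
  define U where "U = (\<Sum>i\<le>2 * n. monom (complex_of_real (u (int n - int i))) i)"
  have dU: "degree U \<le> 2 * n"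
    unfolding U_def by (rule degree_sum_le) (auto intro: order.trans[OF degree_monom_le])
  define P1 where "P1 = monom 1 (m * p) * U"
  define P2 where "P2 = monom 1 n * (Q * R) ^ p"
  have agree: "poly P1 (cis \<xi>) = poly P2 (cis \<xi>)" for \<xi>
  proof -
    have "poly U (cis \<xi>) = cis \<xi> ^ n * fourier u \<xi>"
      unfolding U_def fourier_shift[OF supp] by (simp add: poly_sum poly_monom)
    then have "poly P1 (cis \<xi>) = cis \<xi> ^ (m * p) * (cis \<xi> ^ n * complex_of_real ((cmod (poly Q (cis \<xi>))) ^ (2 * p)))"
      using F by (simp add: P1_def poly_monom)
    also have "\<dots> = cis \<xi> ^ n * (cis \<xi> ^ m * complex_of_real ((cmod (poly Q (cis \<xi>)))\<^sup>2)) ^ p"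
      apply (simp add: power_mult_distrib power_mult mult_ac)
      by (metis mult.commute power_mult)
    also have "\<dots> = poly P2 (cis \<xi>)"
      by (simp add: P2_def poly_monom QR)
    finally show ?thesis .
  qed
  define M where "M = 2 * n + 2 * m * p + 1"
  define A where "A = {exp (2 * of_real pi * \<i> * of_nat j / of_nat M) | j. j < M}"
  have cardA: "card A = M"
    using bij_betw_same_card[OF bij_betw_roots_unity[of M]] by (simp add: A_def)
  have dP2: "degree P2 = n + 2 * m * p"
    using Qnz Rnz by (simp add: P2_def degree_mult_eq degree_monom_eq degree_power_eq dR m_def)
  have dP1: "degree P1 \<le> m * p + 2 * n"
  proof -
    have "degree P1 \<le> degree (monom (1::complex) (m * p)) + degree U"
      unfolding P1_def by (rule degree_mult_le)
    also have "\<dots> \<le> m * p + 2 * n" using dU by (simp add: degree_monom_eq)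
    finally show ?thesis .
  qed
  have "P1 = P2"
  proof (rule poly_eqI_degree[of A])
    fix x assume "x \<in> A"
    then obtain j where x: "x = exp (2 * of_real pi * \<i> * of_nat j / of_nat M)" by (auto simp: A_def)
    have "x = cis (2 * pi * real j / real M)" unfolding x by (simp add: cis_conv_exp mult_ac)
    then show "poly P1 x = poly P2 x" using agree by simp
  next
    show "degree P1 < card A" using dP1 cardA M_def by simp
    show "degree P2 < card A" using dP2 cardA M_def by simp
  qed
  then have "n + 2 * m * p \<le> m * p + 2 * n" using dP1 dP2 by simp
  then show ?thesis by (simp add: m_def mult.commute)
qed



lemma lim_ratio: "(\<lambda>j. sqrt (2 * real j + 1) / sqrt (2 * real (j + K) + 1)) \<longlonglongrightarrow> 1"
proof -
  have at: "LIM j sequentially. (2 * real K + 1) + 2 * real j :> at_top"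
    by (rule filterlim_tendsto_add_at_top[OF tendsto_const])
       (rule filterlim_tendsto_pos_mult_at_top[OF tendsto_const _ filterlim_real_sequentially], simp)
  have fr: "(\<lambda>j. 2 * real K / ((2 * real K + 1) + 2 * real j)) \<longlonglongrightarrow> 0"
    by (rule real_tendsto_divide_at_top[OF tendsto_const at])
  have q: "(\<lambda>j. 1 - 2 * real K / ((2 * real K + 1) + 2 * real j)) \<longlonglongrightarrow> 1 - 0"
    by (intro tendsto_diff tendsto_const fr)
  have eq: "1 - 2 * real K / ((2 * real K + 1) + 2 * real j) = (2 * real j + 1) / (2 * real (j + K) + 1)" for j
    by (simp add: field_simps)
  have "(\<lambda>j. sqrt ((2 * real j + 1) / (2 * real (j + K) + 1))) \<longlonglongrightarrow> sqrt 1"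
    by (rule tendsto_real_sqrt) (use q in \<open>simp add: eq\<close>)
  then show ?thesis by (simp add: real_sqrt_divide)
qed

theorem proposition1p3:
  fixes l n :: nat and u :: "int \<Rightarrow> real"
  assumes "l > 0" and "even l"
    and "n > 0" and "(l div 2) dvd n"
    and "\<forall>j. (j < - int n \<or> j > int n) \<longrightarrow> u j = 0"
    and "\<forall>j. u j = u (- j)"
    and "(\<Sum>j = - int n..int n. u j) = 1"
    and "\<exists>Q :: complex poly. (\<forall>z. cmod z < 1 \<longrightarrow> poly Q z \<noteq> 0) \<and>
           (\<forall>\<xi>::real. fourier u \<xi> = complex_of_real ((cmod (poly Q (cis \<xi>))) ^ l))"
  shows "Sup {l2norm (nabla_pow l (conv u f)) / l2norm f | f. in_l2 f \<and> f \<noteq> (\<lambda>_. 0)}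
           \<ge> (2 / (1 + 2 * real n / real l)) ^ l"
proof -
  note supp = assms(5)
  obtain Q :: "complex poly" where Qnz: "\<forall>z. cmod z < 1 \<longrightarrow> poly Q z \<noteq> 0"
    and FQ: "\<forall>\<xi>::real. fourier u \<xi> = complex_of_real ((cmod (poly Q (cis \<xi>))) ^ l)"
    using assms(8) by blast
  define p where "p = l div 2"
  have l2p: "l = 2 * p" using assms(2) by (simp add: p_def)
  have ppos: "p > 0" using assms(1) l2p by simp
  have Q0: "coeff Q 0 \<noteq> 0" using Qnz[rule_format, of 0] by (simp add: poly_0_coeff_0)
  have degb: "degree Q * p \<le> n"
    by (rule deg_bound[OF ppos Q0 supp]) (use FQ l2p in simp)
  define a0 where "a0 = (\<lambda>d. complex_of_real (u (- d)))"
  have "fourier u 0 = (\<Sum>d\<in>{- int n..int n}. complex_of_real (u (- d)))"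
    unfolding fourier_opK[OF supp] opK_def by simp
  also have "\<dots> = (\<Sum>j\<in>{- int n..int n}. complex_of_real (u j))"
    by (rule sum.reindex_bij_witness[where i="\<lambda>d. - d" and j="\<lambda>d. - d"]) auto
  also have "\<dots> = 1" using assms(7) by (metis of_real_1 of_real_sum)
  finally have "complex_of_real ((cmod (poly Q 1)) ^ l) = 1" using FQ[rule_format, of 0] by simp
  then have "(cmod (poly Q 1)) ^ l = 1 ^ l" by (metis of_real_1 of_real_eq_iff power_one)
  then have Q1: "cmod (poly Q 1) = 1"
    using assms(1) by (subst (asm) power_eq_iff_eq_base) auto
  define N where "N = Suc (degree Q)"
  interpret R: rootsN N by unfold_locales (simp add: N_def)
  obtain k where kN: "k < N" and kb: "2 * cmod (poly Q 1) / real N \<le> cmod (R.z k - 1) * cmod (poly Q (R.z k))"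
    using R.interp_ineq[of Q] by (auto simp: N_def)
  define \<xi> where "\<xi> = real (2 * k + 1) * (pi / real N)"
  have zx: "R.z k = cis \<xi>" unfolding R.z_def R.w_def \<xi>_def Complex.DeMoivre by (rule refl)
  define c where "c = 2 / (1 + 2 * real n / real l)"
  have Nle: "real N \<le> 1 + 2 * real n / real l"
  proof -
    have "real (degree Q) * real p \<le> real n" using degb by (metis of_nat_le_iff of_nat_mult)
    then have "real (degree Q) \<le> real n / real p" using ppos by (simp add: field_simps)
    then show ?thesis by (simp add: N_def l2p)
  qed
  have c_le: "c \<le> 2 / real N" unfolding c_def
  proof (rule divide_left_mono[OF Nle])
    have "0 < 1 + 2 * real n / real l" by (simp add: add_pos_nonneg)
    moreover have "0 < real N" by (simp add: N_def)
    ultimately show "0 < (1 + 2 * real n / real l) * real N" by (rule mult_pos_pos)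
  qed simp
  have c0: "0 \<le> c" unfolding c_def by simp
  have kb': "c \<le> cmod (cis \<xi> - 1) * cmod (poly Q (cis \<xi>))"
    using kb c_le Q1 zx by simp
  define K where "K = n + l"
  define al where "al = (dif ^^ l) a0"
  have s0: "supp_in n a0" using supp_a0[OF supp] by (simp add: a0_def)
  have opeq: "nabla_pow l (conv u f) = opK K al f" for f
    using nabla_pow_opK[OF s0, of l] conv_opK[OF supp] by (simp add: K_def al_def a0_def)
  define s where "s = opK K al (\<lambda>k. cis (of_int k * \<xi>)) 0"
  have s_eq: "s = (cis \<xi> - 1) ^ l * fourier u \<xi>"
    unfolding s_def K_def al_def a0_def by (rule symbol_formula[OF supp])
  have s_ge: "c ^ l \<le> cmod s"
  proof -
    have "cmod s = (cmod (cis \<xi> - 1) * cmod (poly Q (cis \<xi>))) ^ l"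
      using FQ by (simp add: s_eq norm_mult norm_power power_mult_distrib)
    then show ?thesis using kb' c0 by (simp add: power_mono)
  qed
  define S where "S = {l2norm (nabla_pow l (conv u f)) / l2norm f | f. in_l2 f \<and> f \<noteq> (\<lambda>_. 0)}"
  define Cst where "Cst = (\<Sum>d = - int K..int K. cmod (al d))"
  have Cst0: "Cst \<ge> 0" unfolding Cst_def by (simp add: sum_nonneg)
  have bdd: "bdd_above S"
  proof (rule bdd_aboveI)
    fix x assume "x \<in> S"
    then obtain f where f: "in_l2 f" and x: "x = l2norm (opK K al f) / l2norm f"
      by (auto simp: S_def opeq)
    have b: "l2norm (opK K al f) \<le> Cst * l2norm f" unfolding Cst_def by (rule opK_bound[OF f])
    have n0: "l2norm f \<ge> 0" by (simp add: l2norm_def infsum_nonneg)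
    show "x \<le> Cst"
    proof (cases "l2norm f = 0")
      case True then show ?thesis using x Cst0 by simp
    next
      case False
      then have "l2norm f > 0" using n0 by simp
      then show ?thesis using x b by (simp add: divide_le_eq)
    qed
  qed
  have low: "sqrt (2 * real j + 1) / sqrt (2 * real (j + K) + 1) * cmod s \<le> Sup S" for j
  proof -
    have "sqrt (2 * real j + 1) * cmod s \<le> l2norm (opK K al (testf \<xi> (j + K)))"
      using testf_lower[of K "j + K" al \<xi>] by (simp add: s_def)
    then have "sqrt (2 * real j + 1) / sqrt (2 * real (j + K) + 1) * cmod s
        \<le> l2norm (opK K al (testf \<xi> (j + K))) / l2norm (testf \<xi> (j + K))"
      by (simp add: testf_norm divide_right_mono)
    also have "\<dots> \<le> Sup S"
    proof (rule cSup_upper[OF _ bdd])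
      show "l2norm (opK K al (testf \<xi> (j + K))) / l2norm (testf \<xi> (j + K)) \<in> S"
        unfolding S_def opeq[symmetric] using testf_l2 testf_nz by blast
    qed
    finally show ?thesis .
  qed
  have lim: "(\<lambda>j. sqrt (2 * real j + 1) / sqrt (2 * real (j + K) + 1) * cmod s) \<longlonglongrightarrow> 1 * cmod s"
    by (intro tendsto_mult lim_ratio tendsto_const)
  have "cmod s \<le> Sup S"
    using LIMSEQ_le_const2[OF lim] low by auto
  then show ?thesis using s_ge by (simp add: S_def c_def)
qed

end
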